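(* Let $d\ge2$, $\varepsilon\ge1$, $s=\lceil d/(1+e^\varepsilon)\rceil$. Let $q^{\mathrm{ss}}$ be the $\varepsilon$-LDP $\texttt{Subset Selection}$ mechanism with estimator $\hat{\mathbf{x}}^{\mathrm{ss}}=(\mathbf{z}-b_{\mathrm{ss}}\mathbf{1})/m_{\mathrm{ss}}$, and let $q^{\mathrm{mmrc}}$ be the MMRC mechanism simulating it with $N$ candidates and estimator $\hat{\mathbf{x}}^{\mathrm{mmrc}}=(\mathbf{z}_K-b_{\mathrm{mmrc}}\mathbf{1})/m_{\mathrm{mmrc}}$. Let $\lambda>0$. If \[ N\ge\frac{2(e^\varepsilon+1)^2(1+\lambda)^2}{0.24^2\lambda^2}\ln\Big(\frac{8(1+\lambda)}{0.24\lambda}\Big), \] then for every $\mathbf{x}\in\{e_1,\dots,e_d\}$, \[ \mathbb{E}_{q^{\mathrm{mmrc}}}\big[\|\hat{\mathbf{x}}^{\mathrm{mmrc}}-\mathbf{x}\|_2^2\big]\le(1+4\lambda+5\lambda^2+2\lambda^3)\,\mathbb{E}_{q^{\mathrm{ss}}}\big[\|\hat{\mathbf{x}}^{\mathrm{ss}}-\mathbf{x}\|_2^2\big]. \]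
   Context: $\texttt{Subset Selection}$: inputs $\{e_1,\dots,e_d\}$; outputs $\mathcal{Z}=\{\mathbf{z}\in\{0,1\}^d:\sum_iz_i=s\}$; for $\mathbf{x}=e_j$, $\mathsf{Cap}_{\mathbf{x}}=\{\mathbf{z}\in\mathcal{Z}:z_j=1\}$; $q^{\mathrm{ss}}(\mathbf{z}\mid\mathbf{x})=c_1=\frac{e^\varepsilon}{\binom{d-1}{s-1}e^\varepsilon+\binom{d-1}{s}}$ on $\mathsf{Cap}_{\mathbf{x}}$ and $c_2=\frac{1}{\binom{d-1}{s-1}e^\varepsilon+\binom{d-1}{s}}$ otherwise; $m_{\mathrm{ss}}=\frac{s(d-s)(e^\varepsilon-1)}{(d-1)(s(e^\varepsilon-1)+d)}$, $b_{\mathrm{ss}}=\frac{s((s-1)e^\varepsilon+(d-s))}{(d-1)(s(e^\varepsilon-1)+d)}$; $\mathbf{1}$ is the all-ones vector. Let $\bar\theta=s/d$. MMRC: draw $\mathbf{z}_1,\dots,\mathbf{z}_N$ i.i.d. uniform on $\mathcal{Z}$; $\theta$ = fraction of candidates in $\mathsf{Cap}_{\mathbf{x}}$; $\pi^{\mathrm{mrc}}(k)=\frac1N\frac{c_i}{\theta c_1+(1-\theta)c_2}$ ($i=1$ cap, $i=2$ otherwise); $t_u=\frac1N\frac{c_1}{\bar\theta c_1+(1-\bar\theta)c_2}$, $t_l=\frac1N\frac{c_2}{\bar\theta c_1+(1-\bar\theta)c_2}$; $\pi^{\mathrm{mmrc}}=\pi^{\mathrm{mrc}}$ if $\theta=\bar\theta$;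 if $\theta<\bar\theta$, $t_u$ on cap candidates and $\frac{1-N\theta t_u}{N(1-\theta)}$ on others; if $\theta>\bar\theta$, $t_l$ on non-cap candidates and $\frac{1-N(1-\theta)t_l}{N\theta}$ on cap ones; $K\sim\pi^{\mathrm{mmrc}}$. With $N\theta\sim\mathrm{Binom}(N,s/d)$, $G=\mathbb{E}_\theta\big[\frac{e^\varepsilon\theta}{e^\varepsilon\bar\theta+1-\bar\theta}\mathbf{1}(\theta\le\bar\theta)+\frac{e^\varepsilon\bar\theta+\theta-\bar\theta}{e^\varepsilon\bar\theta+1-\bar\theta}\mathbf{1}(\theta>\bar\theta)\big]$, $m_{\mathrm{mmrc}}=\frac{d}{d-1}G-\frac{s}{d-1}$, $b_{\mathrm{mmrc}}=\frac{s-G}{d-1}$. Expectations under $q^{\mathrm{mmrc}}$ are over the candidates and $K$. *)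

theory Defs
  imports Complex_Main "HOL-Library.FuncSet"
begin

text \<open>Coordinates are indexed by {..<d}; the input e_j is represented by the index j < d;
an output z in {0,1}^d with s ones is represented by its support S, a subset of {..<d}
with card S = s.\<close>

definition ss_outputs :: "nat \<Rightarrow> nat \<Rightarrow> nat set set" where
  "ss_outputs d s = {S. S \<subseteq> {..<d} \<and> card S = s}"

definition ss_c1 :: "nat \<Rightarrow> nat \<Rightarrow> real \<Rightarrow> real" where
  "ss_c1 d s eps = exp eps / (real ((d-1) choose (s-1)) * exp eps + real ((d-1) choose s))"

definition ss_c2 :: "nat \<Rightarrow> nat \<Rightarrow> real \<Rightarrow> real" where
  "ss_c2 d s eps = 1 / (real ((d-1) choose (s-1)) * exp eps + real ((d-1) choose s))"

definition q_ss :: "nat \<Rightarrow> nat \<Rightarrow> real \<Rightarrow> nat \<Rightarrow> nat set \<Rightarrow> real" where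
  "q_ss d s eps j S = (if j \<in> S then ss_c1 d s eps else ss_c2 d s eps)"

definition m_ss :: "nat \<Rightarrow> nat \<Rightarrow> real \<Rightarrow> real" where
  "m_ss d s eps = real s * (real d - real s) * (exp eps - 1) /
     ((real d - 1) * (real s * (exp eps - 1) + real d))"

definition b_ss :: "nat \<Rightarrow> nat \<Rightarrow> real \<Rightarrow> real" where
  "b_ss d s eps = real s * ((real s - 1) * exp eps + (real d - real s)) /
     ((real d - 1) * (real s * (exp eps - 1) + real d))"

definition est_loss :: "nat \<Rightarrow> real \<Rightarrow> real \<Rightarrow> nat \<Rightarrow> nat set \<Rightarrow> real" where
  "est_loss d m b j S = (\<Sum>i<d. (((if i \<in> S then 1 else 0) - b) / m - (if i = j then 1 else 0))\<^sup>2)"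

definition ss_risk :: "nat \<Rightarrow> nat \<Rightarrow> real \<Rightarrow> nat \<Rightarrow> real" where
  "ss_risk d s eps j = (\<Sum>S\<in>ss_outputs d s. q_ss d s eps j S * est_loss d (m_ss d s eps) (b_ss d s eps) j S)"

definition mmrc_pi :: "nat \<Rightarrow> nat \<Rightarrow> real \<Rightarrow> nat \<Rightarrow> nat \<Rightarrow> (nat \<Rightarrow> nat set) \<Rightarrow> nat \<Rightarrow> real" where
  "mmrc_pi d s eps N j zs k =
    (let c1 = ss_c1 d s eps; c2 = ss_c2 d s eps;
         \<theta> = real (card {l\<in>{..<N}. j \<in> zs l}) / real N;
         \<theta>b = real s / real d;
         tu = c1 / (real N * (\<theta>b * c1 + (1 - \<theta>b) * c2));
         tl = c2 / (real N * (\<theta>b * c1 + (1 - \<theta>b) * c2));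
         cap = (j \<in> zs k)
     in if \<theta> = \<theta>b then (if cap then c1 else c2) / (real N * (\<theta> * c1 + (1 - \<theta>) * c2))
        else if \<theta> < \<theta>b then (if cap then tu else (1 - real N * \<theta> * tu) / (real N * (1 - \<theta>)))
        else (if cap then (1 - real N * (1 - \<theta>) * tl) / (real N * \<theta>) else tl))"

definition mmrc_G :: "nat \<Rightarrow> nat \<Rightarrow> real \<Rightarrow> nat \<Rightarrow> real" where
  "mmrc_G d s eps N =
    (let \<theta>b = real s / real d;
         f = (\<lambda>\<theta>::real. if \<theta> \<le> \<theta>b then exp eps * \<theta> / (exp eps * \<theta>b + 1 - \<theta>b)
                        else (exp eps * \<theta>b + \<theta> - \<theta>b) / (exp eps * \<theta>b + 1 - \<theta>b))
     in \<Sum>n\<le>N. real (N choose n) * \<theta>b ^ n * (1 - \<theta>b) ^ (N - n) * f (real n / real N))"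

definition m_mmrc :: "nat \<Rightarrow> nat \<Rightarrow> real \<Rightarrow> nat \<Rightarrow> real" where
  "m_mmrc d s eps N = real d / (real d - 1) * mmrc_G d s eps N - real s / (real d - 1)"

definition b_mmrc :: "nat \<Rightarrow> nat \<Rightarrow> real \<Rightarrow> nat \<Rightarrow> real" where
  "b_mmrc d s eps N = (real s - mmrc_G d s eps N) / (real d - 1)"

text \<open>Expectation over i.i.d. uniform candidates z_1..z_N (indexed 0..N-1) and K ~ pi^mmrc\<close>
definition mmrc_risk :: "nat \<Rightarrow> nat \<Rightarrow> real \<Rightarrow> nat \<Rightarrow> nat \<Rightarrow> real" where
  "mmrc_risk d s eps N j =
    (\<Sum>zs\<in>PiE {..<N} (\<lambda>_. ss_outputs d s).
       (\<Sum>k<N. mmrc_pi d s eps N j zs k *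
          est_loss d (m_mmrc d s eps N) (b_mmrc d s eps N) j (zs k)))
    / real (card (ss_outputs d s)) ^ N"

end

theory Submission
  imports Defs "HOL-Library.FuncSet"
begin

definition Vf :: "real \<Rightarrow> real \<Rightarrow> real \<Rightarrow> real" where
  "Vf d s x = x*(1-x) + (d-1)*((s-x)/(d-1))*(1-(s-x)/(d-1))"

definition mf :: "real \<Rightarrow> real \<Rightarrow> real \<Rightarrow> real" where
  "mf d s x = (d*x - s)/(d-1)"

lemma Vf_quad:
  assumes "d > 1"
  shows "Vf d s y = Vf d s x + 2 * mf d s x * (x - y) - d/(d-1) * (x-y)^2"
proof -
  obtain k where dk: "d = k + 1" and k: "k > 0" using assms by (metis add.commute diff_add_cancel diff_gt_0_iff_gt)
  show ?thesis unfolding Vf_def mf_def dk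
    using k by (simp add: field_simps power2_eq_square)
qed

lemma risk_form:
  assumes "d > 1" "mf d s x \<noteq> 0"
  shows "(s*(1-(s-x)/(d-1))^2 + (d-s)*((s-x)/(d-1))^2)/(mf d s x)^2 + 1 + 2*((s-x)/(d-1))/(mf d s x)
          - 2*x/(mf d s x) = Vf d s x / (mf d s x)^2"
proof -
  obtain k where dk: "d = k + 1" and k: "k > 0" using assms by (metis add.commute diff_add_cancel diff_gt_0_iff_gt)
  let ?m = "mf d s x" and ?b = "(s-x)/(d-1)"
  have xm: "x = ?m + ?b" using k unfolding mf_def dk by (simp add: field_simps)
  have bm: "?b = x - ?m" using xm by linarith
  have e1: "2*?b/?m - 2*x/?m = -2" using assms(2) unfolding bm by (simp add: field_simps)
  have e2: "Vf d s x = s*(1-?b)^2 + (d-s)*?b^2 - ?m^2"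
    using k unfolding Vf_def mf_def dk by (simp add: field_simps power2_eq_square)
  have m2: "?m^2 \<noteq> 0" using assms(2) by simp
  have "(s*(1-?b)^2 + (d-s)*?b^2)/?m^2 + 1 + 2*?b/?m - 2*x/?m
      = (s*(1-?b)^2 + (d-s)*?b^2)/?m^2 + 1 + (2*?b/?m - 2*x/?m)" by simp
  also have "\<dots> = (s*(1-?b)^2 + (d-s)*?b^2)/?m^2 - ?m^2/?m^2" using e1 m2 by simp
  also have "\<dots> = Vf d s x / ?m^2" unfolding e2 by (simp add: diff_divide_distrib)
  finally show ?thesis .
qed

lemma key_ineq:
  fixes d p e r lam N g G :: real
  assumes d2: "d \<ge> 2" and e1: "e > 1" and pl: "1/(1+e) \<le> p" and pu: "p \<le> 1/2"
    and s1: "p*d \<ge> 1" and r0: "r \<ge> 0"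
    and rN: "4*N*(p*(1-p))*r^2 \<le> 1" and lam: "lam > 0"
    and N1: "e^2 \<le> 4*N*lam^2" and N2: "(1+e)*(1+lam)^2 \<le> 2*N*lam^2"
    and gdef: "g = e*p/(e*p+1-p)"
    and Gdef: "G = g - (e-1)*(p*(1-p))*r/(e*p+1-p)"
  shows "mf d (p*d) g > 0" "mf d (p*d) G > 0"
    "Vf d (p*d) G / (mf d (p*d) G)^2
      \<le> (1 + 4*lam + 5*lam^2 + 2*lam^3) * (Vf d (p*d) g / (mf d (p*d) g)^2)"
proof -
  define D where "D = e*p+1-p"
  define pq where "pq = p*(1-p)"
  have p0: "p > 0" using pl e1 by (smt (verit) divide_pos_pos)
  have ep0: "e*p > 0" using p0 e1 by simp
  have D0: "D > 0" unfolding D_def using ep0 pu by linarith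
  have pq0: "pq > 0" unfolding pq_def using p0 pu by simp
  have pq4': "pq = 1/4 - (p - 1/2)^2" unfolding pq_def by (simp add: power2_eq_square algebra_simps)
  have pq4: "pq \<le> 1/4" unfolding pq4' using zero_le_power2[of "p - 1/2"] by linarith
  have pqlow: "pq \<ge> 1/(2*(1+e))"
  proof -
    have "pq \<ge> p * (1/2)" unfolding pq_def using p0 pu by (intro mult_left_mono) auto
    moreover have "p*(1/2) \<ge> 1/(2*(1+e))" using pl e1 by (simp add: field_simps)
    ultimately show ?thesis by linarith
  qed
  have Npos: "N > 0"
  proof -
    have "2*N*lam^2 > 0" using N2 e1 lam by (smt (verit) mult_pos_pos zero_less_power2)
    thus ?thesis using lam by (simp add: zero_less_mult_iff)
  qed
  have dd: "d - 1 > 0" using d2 by simp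
  have mfx: "\<And>x. mf d (p*d) x = d*(x-p)/(d-1)" unfolding mf_def by (simp add: algebra_simps)
  have gp: "g - p = (e-1)*pq/D" unfolding gdef pq_def D_def[symmetric] using D0
    by (simp add: field_simps D_def)
  have mg: "mf d (p*d) g = d*(e-1)*pq/((d-1)*D)" unfolding mfx gp by (simp add: mult.commute mult.assoc)
  have gG: "g - G = (e-1)*pq*r/D" unfolding Gdef pq_def D_def by simp
  have Gp: "G - p = (e-1)*pq*(1-r)/D" 
  proof -
    have "G - p = (g-p) - (g-G)" by simp
    also have "\<dots> = ((e-1)*pq - (e-1)*pq*r)/D" unfolding gp gG by (simp add: diff_divide_distrib)
    finally show ?thesis by (simp add: algebra_simps)
  qed
  have mG: "mf d (p*d) G = mf d (p*d) g * (1 - r)"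
  proof -
    have "mf d (p*d) G = d*((e-1)*pq*(1-r)/D)/(d-1)" using mfx[of G] Gp by simp
    then show ?thesis unfolding mg using D0 dd by (simp add: field_simps)
  qed
  have mg0: "mf d (p*d) g > 0" unfolding mg using d2 e1 pq0 D0 dd by simp
  show "mf d (p*d) g > 0" by (rule mg0)
  have r2: "r^2 \<le> (1+e)/(2*N)"
  proof -
    have "r^2 * (2*N/(1+e)) \<le> r^2 * (4*N*pq)"
    proof (rule mult_left_mono)
      have "4*N*pq \<ge> 4*N*(1/(2*(1+e)))" using pqlow Npos by (intro mult_left_mono) auto
      moreover have "4*N*(1/(2*(1+e))) = 2*N/(1+e)" using e1 by (simp add: field_simps)
      ultimately show "2*N/(1+e) \<le> 4*N*pq" by linarith
    qed simp
    also have "\<dots> \<le> 1" using rN unfolding pq_def by (simp add: algebra_simps)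
    finally have "r^2 * (2*N/(1+e)) \<le> 1" .
    thus ?thesis using Npos e1 by (simp add: field_simps)
  qed
  have rl: "r*(1+lam) \<le> lam"
  proof -
    have "(r*(1+lam))^2 = r^2*(1+lam)^2" by (simp add: power_mult_distrib)
    also have "\<dots> \<le> (1+e)/(2*N)*(1+lam)^2" using r2 by (intro mult_right_mono) auto
    also have "\<dots> = ((1+e)*(1+lam)^2)/(2*N)" by simp
    also have "\<dots> \<le> (2*N*lam^2)/(2*N)" using N2 Npos by (intro divide_right_mono) auto
    also have "\<dots> = lam^2" using Npos by simp
    finally have h: "(r*(1+lam))^2 \<le> lam^2" .
    show ?thesis using power2_le_imp_le[OF h] lam by simp
  qed
  have r1: "1 - r \<ge> 1/(1+lam)" using rl lam by (simp add: field_simps)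
  have r1p: "1 - r > 0" using r1 lam by (smt (verit) divide_pos_pos)
  have mG0: "mf d (p*d) G > 0" unfolding mG using mg0 r1p by simp
  show "mf d (p*d) G > 0" by (rule mG0)
  have g01: "g \<ge> 0" "g \<le> 1" unfolding gdef D_def[symmetric] using D0 p0 e1 pu
    by (auto simp: D_def field_simps)
  have bnd: "0 \<le> (p*d - g)/(d-1)" "(p*d - g)/(d-1) \<le> 1"
  proof -
    show "0 \<le> (p*d - g)/(d-1)" using s1 g01 dd by simp
    have "p*d \<le> d/2" using pu d2 by (simp add: mult_right_mono[of p "1/2" d, simplified])
    then have "p*d - g \<le> d - 1" using g01 d2 by linarith
    then show "(p*d - g)/(d-1) \<le> 1" using dd by simp
  qed
  have Vg: "Vf d (p*d) g \<ge> g*(1-g)"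
  proof -
    have "0 \<le> (d-1)*((p*d - g)/(d-1))*(1-(p*d - g)/(d-1))"
      using bnd dd by (intro mult_nonneg_nonneg) auto
    thus ?thesis unfolding Vf_def by linarith
  qed
  have g1g: "g*(1-g) = e*pq/D^2" unfolding gdef pq_def D_def using D0 unfolding D_def
    by (simp add: field_simps power2_eq_square)
  have key: "mf d (p*d) g * (g - G) \<le> lam * (g*(1-g))"
  proof -
    have lhs: "mf d (p*d) g * (g - G) = (d/(d-1)) * ((e-1)^2*pq*r) * pq / D^2"
      unfolding mg gG using D0 dd by (simp add: field_simps power2_eq_square)
    have A: "2*((e-1)^2*pq*r) \<le> lam*e"
    proof -
      have "(2*((e-1)^2*pq*r))^2 = (e-1)^4 * pq * (4*pq*r^2)"
        by (simp add: power2_eq_square power4_eq_xxxx algebra_simps)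
      also have "\<dots> \<le> (e-1)^4 * pq * (1/N)"
      proof (rule mult_left_mono)
        show "4*pq*r^2 \<le> 1/N" using rN Npos unfolding pq_def by (simp add: field_simps)
        show "0 \<le> (e-1)^4 * pq" using pq0 e1 by simp
      qed
      also have "\<dots> \<le> (e-1)^4 * (1/4) * (1/N)"
        using pq4 Npos by (intro mult_right_mono mult_left_mono) auto
      also have "\<dots> \<le> e^4 * (1/4) * (1/N)"
        using e1 Npos by (intro mult_right_mono power_mono) auto
      also have "\<dots> = e^2 * (e^2/(4*N))" by (simp add: power4_eq_xxxx power2_eq_square)
      also have "\<dots> \<le> e^2 * lam^2" using N1 Npos by (intro mult_left_mono) (auto simp: field_simps)
      also have "\<dots> = (lam*e)^2" by (simp add: power_mult_distrib)
      finally have h: "(2*((e-1)^2*pq*r))^2 \<le> (lam*e)^2" .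
      show ?thesis using power2_le_imp_le[OF h] lam e1 by simp
    qed
    have dd2: "d/(d-1) \<le> 2" using d2 dd by (simp add: field_simps)
    have B: "(d/(d-1)) * ((e-1)^2*pq*r) \<le> lam*e"
    proof -
      have "(d/(d-1)) * ((e-1)^2*pq*r) \<le> 2 * ((e-1)^2*pq*r)"
        using dd2 pq0 r0 by (intro mult_right_mono) auto
      thus ?thesis using A by linarith
    qed
    have "(d/(d-1)) * ((e-1)^2*pq*r) * pq / D^2 \<le> lam*e*pq/D^2"
      using B pq0 D0 by (intro divide_right_mono mult_right_mono) auto
    thus ?thesis unfolding lhs g1g by simp
  qed
  have VG: "Vf d (p*d) G \<le> (1+2*lam) * Vf d (p*d) g"
  proof -
    have "Vf d (p*d) G \<le> Vf d (p*d) g + 2 * mf d (p*d) g * (g - G)"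
      using Vf_quad[of d "p*d" G g] dd by (smt (verit) divide_nonneg_nonneg zero_le_power2 mult_nonneg_nonneg)
    also have "\<dots> \<le> Vf d (p*d) g + 2 * lam * (g*(1-g))" using key by simp
    also have "\<dots> \<le> Vf d (p*d) g + 2 * lam * Vf d (p*d) g" using Vg lam by simp
    finally show ?thesis by (simp add: algebra_simps)
  qed
  have Vg0: "Vf d (p*d) g \<ge> 0" using Vg g01 by (smt (verit) mult_nonneg_nonneg)
  have inv: "1/(1-r)^2 \<le> (1+lam)^2"
  proof -
    have "1/(1-r) \<le> 1+lam" using r1 lam r1p by (simp add: field_simps)
    hence "(1/(1-r))^2 \<le> (1+lam)^2" using r1p by (intro power_mono) auto
    thus ?thesis by (simp add: power_divide)
  qed
  have "Vf d (p*d) G / (mf d (p*d) G)^2 = Vf d (p*d) G / (mf d (p*d) g)^2 * (1/(1-r)^2)"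
    unfolding mG by (simp add: power_mult_distrib)
  also have "\<dots> \<le> (1+2*lam) * Vf d (p*d) g / (mf d (p*d) g)^2 * (1+lam)^2"
  proof (rule mult_mono)
    show "Vf d (p*d) G / (mf d (p*d) g)^2 \<le> (1+2*lam) * Vf d (p*d) g / (mf d (p*d) g)^2"
      using VG by (intro divide_right_mono) auto
    show "0 \<le> (1+2*lam) * Vf d (p*d) g / (mf d (p*d) g)^2" using Vg0 lam by simp
  qed (use inv in auto)
  also have "\<dots> = (1 + 4*lam + 5*lam^2 + 2*lam^3) * (Vf d (p*d) g / (mf d (p*d) g)^2)"
  proof -
    have k: "(1+2*lam)*(1+lam)^2 = 1 + 4*lam + 5*lam^2 + 2*lam^3"
      by (simp add: power2_eq_square power3_eq_cube algebra_simps)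
    show ?thesis unfolding k[symmetric] by (simp add: mult_ac)
  qed
  finally show "Vf d (p*d) G / (mf d (p*d) G)^2
      \<le> (1 + 4*lam + 5*lam^2 + 2*lam^3) * (Vf d (p*d) g / (mf d (p*d) g)^2)" .
qed

lemma mom0:
  fixes p q :: real assumes "p + q = 1"
  shows "(\<Sum>n\<le>N. real (N choose n) * p^n * q^(N-n)) = 1"
  using binomial_ring[of p q N] assms by (simp add: mult_ac)

lemma mom1:
  fixes p q :: real assumes "p + q = 1"
  shows "(\<Sum>n\<le>N. real n * (real (N choose n) * p^n * q^(N-n))) = real N * p"
proof (cases N)
  case 0 then show ?thesis by simp
next
  case (Suc M)
  have "(\<Sum>n\<le>Suc M. real n * (real (Suc M choose n) * p^n * q^(Suc M-n)))
      = (\<Sum>i\<le>M. real (Suc i) * (real (Suc M choose Suc i) * p^(Suc i) * q^(Suc M - Suc i)))"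
    by (subst sum.atMost_Suc_shift) simp
  also have "\<dots> = (\<Sum>i\<le>M. real (Suc M) * p * (real (M choose i) * p^i * q^(M-i)))"
  proof (rule sum.cong)
    fix i assume "i \<in> {..M}"
    have h: "real (Suc i) * real (Suc M choose Suc i) = real (Suc M) * real (M choose i)"
      using Suc_times_binomial[of i M] by (metis of_nat_mult)
    have "real (Suc i) * (real (Suc M choose Suc i) * p^(Suc i) * q^(Suc M - Suc i))
        = (real (Suc i) * real (Suc M choose Suc i)) * (p * p^i * q^(M-i))" by (simp add: mult_ac)
    also have "\<dots> = real (Suc M) * p * (real (M choose i) * p^i * q^(M-i))" unfolding h by (simp add: mult_ac)
    finally show "real (Suc i) * (real (Suc M choose Suc i) * p^(Suc i) * q^(Suc M - Suc i))
        = real (Suc M) * p * (real (M choose i) * p^i * q^(M-i))" .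
  qed simp
  also have "\<dots> = real (Suc M) * p" using mom0[OF assms, of M] by (simp add: sum_distrib_left[symmetric])
  finally show ?thesis using Suc by simp
qed

lemma mom2:
  fixes p q :: real assumes "p + q = 1"
  shows "(\<Sum>n\<le>N. (real n)^2 * (real (N choose n) * p^n * q^(N-n))) = real N * p * ((real N - 1) * p + 1)"
proof (cases N)
  case 0 then show ?thesis by simp
next
  case (Suc M)
  have "(\<Sum>n\<le>Suc M. (real n)^2 * (real (Suc M choose n) * p^n * q^(Suc M-n)))
      = (\<Sum>i\<le>M. (real (Suc i))^2 * (real (Suc M choose Suc i) * p^(Suc i) * q^(Suc M - Suc i)))"
    by (subst sum.atMost_Suc_shift) simp
  also have "\<dots> = (\<Sum>i\<le>M. real (Suc M) * p * ((real i + 1) * (real (M choose i) * p^i * q^(M-i))))"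
  proof (rule sum.cong)
    fix i assume "i \<in> {..M}"
    have h: "real (Suc i) * real (Suc M choose Suc i) = real (Suc M) * real (M choose i)"
      using Suc_times_binomial[of i M] by (metis of_nat_mult)
    have "(real (Suc i))^2 * (real (Suc M choose Suc i) * p^(Suc i) * q^(Suc M - Suc i))
        = (real (Suc i) * real (Suc M choose Suc i)) * (real (Suc i) * (p * p^i * q^(M-i)))"
      by (simp add: power2_eq_square mult_ac)
    also have "\<dots> = real (Suc M) * p * ((real i + 1) * (real (M choose i) * p^i * q^(M-i)))"
      unfolding h by (simp add: mult_ac)
    finally show "(real (Suc i))^2 * (real (Suc M choose Suc i) * p^(Suc i) * q^(Suc M - Suc i))
        = real (Suc M) * p * ((real i + 1) * (real (M choose i) * p^i * q^(M-i)))" .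
  qed simp
  also have "\<dots> = real (Suc M) * p * (\<Sum>i\<le>M. (real i + 1) * (real (M choose i) * p^i * q^(M-i)))"
    by (simp add: sum_distrib_left)
  also have "(\<Sum>i\<le>M. (real i + 1) * (real (M choose i) * p^i * q^(M-i)))
     = (\<Sum>i\<le>M. real i * (real (M choose i) * p^i * q^(M-i))) + (\<Sum>i\<le>M. real (M choose i) * p^i * q^(M-i))"
    by (simp add: distrib_right sum.distrib)
  also have "\<dots> = real M * p + 1" using mom0[OF assms, of M] mom1[OF assms, of M] by simp
  finally show ?thesis using Suc by simp
qed

lemma weighted_cs:
  fixes w x :: "nat \<Rightarrow> real"
  assumes "finite A" "\<And>n. n \<in> A \<Longrightarrow> w n \<ge> 0" "(\<Sum>n\<in>A. w n) = 1"
  shows "(\<Sum>n\<in>A. w n * x n)^2 \<le> (\<Sum>n\<in>A. w n * (x n)^2)"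
proof -
  define a where "a = (\<Sum>n\<in>A. w n * x n)"
  have "0 \<le> (\<Sum>n\<in>A. w n * (x n - a)^2)" using assms(2) by (intro sum_nonneg) auto
  also have "\<dots> = (\<Sum>n\<in>A. w n * (x n)^2) - 2 * a * (\<Sum>n\<in>A. w n * x n) + a^2 * (\<Sum>n\<in>A. w n)"
    by (simp add: power2_diff algebra_simps sum.distrib sum_subtractf sum_distrib_left sum_distrib_right)
  also have "\<dots> = (\<Sum>n\<in>A. w n * (x n)^2) - a^2" using assms(3) unfolding a_def by (simp add: power2_eq_square)
  finally show ?thesis unfolding a_def by simp
qed


lemma G_decomp:
  fixes e p :: real and N :: nat
  assumes N0: "N > 0" and p0: "0 < p" and p1: "p < 1" and e1: "e > 1"
  defines "w \<equiv> \<lambda>n. real (N choose n) * p^n * (1-p)^(N-n)"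
  defines "\<delta> \<equiv> (\<Sum>n\<le>N. w n * max 0 (p - real n / real N))"
  shows "(\<Sum>n\<le>N. real (N choose n) * p^n * (1-p)^(N-n) *
            (if real n / real N \<le> p then e * (real n / real N) / (e*p+1-p)
             else (e*p + real n / real N - p) / (e*p+1-p)))
         = e*p/(e*p+1-p) - (e-1)/(e*p+1-p) * \<delta>"
    and "\<delta> \<ge> 0" and "4 * real N * \<delta>^2 \<le> p*(1-p)"
proof -
  define D where "D = e*p+1-p"
  have ep0: "e*p > 0" using p0 e1 by simp
  have D0: "D > 0" unfolding D_def using ep0 p1 by linarith
  have w0: "\<And>n. w n \<ge> 0" unfolding w_def using p0 p1 by simp
  have sw: "(\<Sum>n\<le>N. w n) = 1" unfolding w_def using mom0[of p "1-p" N] by simp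
  have sw1: "(\<Sum>n\<le>N. w n * real n) = real N * p" unfolding w_def using mom1[of p "1-p" N] by (simp add: mult_ac)
  have sw2: "(\<Sum>n\<le>N. w n * (real n)^2) = real N * p * ((real N - 1) * p + 1)"
    unfolding w_def using mom2[of p "1-p" N] by (simp add: mult_ac)
  define X where "X = (\<lambda>n::nat. real n / real N - p)"
  have sX: "(\<Sum>n\<le>N. w n * X n) = 0"
  proof -
    have "(\<Sum>n\<le>N. w n * X n) = (\<Sum>n\<le>N. w n * real n) / real N - p * (\<Sum>n\<le>N. w n)"
      unfolding X_def by (simp add: algebra_simps sum_subtractf sum_divide_distrib sum_distrib_left)
    also have "\<dots> = 0" unfolding sw sw1 using N0 by simp
    finally show ?thesis .
  qed
  have sX2: "(\<Sum>n\<le>N. w n * (X n)^2) = p*(1-p)/real N"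
  proof -
    have "(\<Sum>n\<le>N. w n * (X n)^2) = (\<Sum>n\<le>N. w n * (real n)^2) / (real N)^2
          - 2 * p * (\<Sum>n\<le>N. w n * real n) / real N + p^2 * (\<Sum>n\<le>N. w n)"
      unfolding X_def by (simp add: power2_diff power_divide algebra_simps sum_subtractf sum.distrib
            sum_divide_distrib sum_distrib_left sum_distrib_right)
    also have "\<dots> = p*(1-p)/real N" unfolding sw sw1 sw2 using N0
      by (simp add: field_simps power2_eq_square)
    finally show ?thesis .
  qed
  have fpt: "\<And>n. (if real n / real N \<le> p then e * (real n / real N) / (e*p+1-p)
             else (e*p + real n / real N - p) / (e*p+1-p))
        = e*p/D + X n / D - (e-1)/D * max 0 (p - real n / real N)"
    unfolding X_def D_def[symmetric] using D0 by (auto simp: field_simps max_def)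
  show "(\<Sum>n\<le>N. real (N choose n) * p^n * (1-p)^(N-n) *
            (if real n / real N \<le> p then e * (real n / real N) / (e*p+1-p)
             else (e*p + real n / real N - p) / (e*p+1-p)))
         = e*p/(e*p+1-p) - (e-1)/(e*p+1-p) * \<delta>"
  proof -
    have "(\<Sum>n\<le>N. real (N choose n) * p^n * (1-p)^(N-n) *
            (if real n / real N \<le> p then e * (real n / real N) / (e*p+1-p)
             else (e*p + real n / real N - p) / (e*p+1-p)))
       = (\<Sum>n\<le>N. w n * (e*p/D + X n / D - (e-1)/D * max 0 (p - real n / real N)))"
      unfolding fpt w_def by simp
    also have "\<dots> = e*p/D * (\<Sum>n\<le>N. w n) + (\<Sum>n\<le>N. w n * X n) / D - (e-1)/D * \<delta>"
      unfolding \<delta>_def by (simp add: algebra_simps sum.distrib sum_subtractf sum_distrib_left sum_divide_distrib)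
    also have "\<dots> = e*p/D - (e-1)/D * \<delta>" unfolding sw sX by simp
    finally show ?thesis unfolding D_def .
  qed
  show "\<delta> \<ge> 0" unfolding \<delta>_def using w0 by (intro sum_nonneg mult_nonneg_nonneg) auto
  have dabs: "2 * \<delta> = (\<Sum>n\<le>N. w n * \<bar>X n\<bar>)"
  proof -
    have "\<And>n. 2 * max 0 (p - real n / real N) = \<bar>X n\<bar> - X n" unfolding X_def by (auto simp: max_def)
    hence "2 * \<delta> = (\<Sum>n\<le>N. w n * (\<bar>X n\<bar> - X n))" unfolding \<delta>_def
      by (simp add: sum_distrib_left mult_ac)
    also have "\<dots> = (\<Sum>n\<le>N. w n * \<bar>X n\<bar>) - (\<Sum>n\<le>N. w n * X n)"
      by (simp add: algebra_simps sum_subtractf)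
    finally show ?thesis unfolding sX by simp
  qed
  have "(2*\<delta>)^2 \<le> (\<Sum>n\<le>N. w n * \<bar>X n\<bar>^2)"
    unfolding dabs using w0 sw by (intro weighted_cs) auto
  also have "\<dots> = p*(1-p)/real N" using sX2 by simp
  finally have "4 * \<delta>^2 \<le> p*(1-p)/real N" by (simp add: power_mult_distrib)
  thus "4 * real N * \<delta>^2 \<le> p*(1-p)" using N0 by (simp add: field_simps)
qed

lemma count_PiE:
  fixes F :: "nat \<Rightarrow> real" and X :: "'a set" and P :: "'a \<Rightarrow> bool"
  assumes fin: "finite X"
  shows "(\<Sum>zs\<in>PiE {..<N} (\<lambda>_. X). F (card {l\<in>{..<N}. P (zs l)}))
       = (\<Sum>n\<le>N. real (N choose n) * real (card {x\<in>X. P x})^n * real (card {x\<in>X. \<not> P x})^(N-n) * F n)"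
proof (induction N arbitrary: F)
  case 0
  then show ?case by simp
next
  case (Suc N)
  define A where "A = real (card {x\<in>X. P x})"
  define B where "B = real (card {x\<in>X. \<not> P x})"
  define c where "c = (\<lambda>zs::nat \<Rightarrow> 'a. card {l\<in>{..<N}. P (zs l)})"
  define W where "W = (\<lambda>F. (\<Sum>n\<le>N. real (N choose n) * A^n * B^(N-n) * F n))"
  have IH: "\<And>F. (\<Sum>zs\<in>PiE {..<N} (\<lambda>_. X). F (c zs)) = W F"
    unfolding c_def W_def A_def B_def using Suc.IH .
  have cupd: "card {l\<in>{..<Suc N}. P ((g(N := y)) l)} = c g + (if P y then 1 else 0)" for g y
  proof -
    have "{l\<in>{..<Suc N}. P ((g(N := y)) l)} = {l\<in>{..<N}. P (g l)} \<union> (if P y then {N} else {})"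
      by (auto simp: less_Suc_eq)
    thus ?thesis unfolding c_def by (auto simp: card_insert_if)
  qed
  have "(\<Sum>zs\<in>PiE {..<Suc N} (\<lambda>_. X). F (card {l\<in>{..<Suc N}. P (zs l)}))
      = (\<Sum>(y,g)\<in>X \<times> PiE {..<N} (\<lambda>_. X). F (card {l\<in>{..<Suc N}. P ((g(N := y)) l)}))"
  proof -
    have inj: "inj_on (\<lambda>(y,g). g(N:=y)) (X \<times> PiE {..<N} (\<lambda>_. X))"
      using inj_combinator[of N "{..<N}" "\<lambda>_. X"] by simp
    show ?thesis unfolding lessThan_Suc PiE_insert_eq sum.reindex[OF inj]
      by (simp add: case_prod_unfold comp_def)
  qed
  also have "\<dots> = (\<Sum>y\<in>X. \<Sum>g\<in>PiE {..<N} (\<lambda>_. X). F (c g + (if P y then 1 else 0)))"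
    unfolding cupd by (simp add: sum.cartesian_product)
  also have "\<dots> = (\<Sum>y\<in>X. if P y then W (\<lambda>n. F (Suc n)) else W F)"
    by (rule sum.cong) (auto simp: IH[symmetric])
  also have "\<dots> = A * W (\<lambda>n. F (Suc n)) + B * W F"
    unfolding A_def B_def using fin by (simp add: sum.If_cases Int_def)
  also have "\<dots> = (\<Sum>n\<le>Suc N. real (Suc N choose n) * A^n * B^(Suc N-n) * F n)"
  proof -
    have e1: "A * W (\<lambda>n. F (Suc n)) = (\<Sum>i\<le>N. real (N choose i) * A^Suc i * B^(N-i) * F (Suc i))"
      unfolding W_def by (simp add: sum_distrib_left mult_ac)
    have e2: "B * W F = (\<Sum>n\<le>Suc N. real (N choose n) * A^n * B^(Suc N-n) * F n)"
    proof -
      have "B * W F = (\<Sum>n\<le>N. real (N choose n) * A^n * B^(Suc N-n) * F n)"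
        unfolding W_def by (auto simp: sum_distrib_left mult_ac Suc_diff_le intro!: sum.cong)
      also have "\<dots> = (\<Sum>n\<le>Suc N. real (N choose n) * A^n * B^(Suc N-n) * F n)"
        by simp
      finally show ?thesis .
    qed
    have "(\<Sum>n\<le>Suc N. real (Suc N choose n) * A^n * B^(Suc N-n) * F n)
        = B^(Suc N) * F 0 + (\<Sum>i\<le>N. real (Suc N choose Suc i) * A^Suc i * B^(N-i) * F (Suc i))"
      by (subst sum.atMost_Suc_shift) simp
    also have "\<dots> = B^(Suc N) * F 0 + (\<Sum>i\<le>N. real (N choose i) * A^Suc i * B^(N-i) * F (Suc i))
                 + (\<Sum>i\<le>N. real (N choose Suc i) * A^Suc i * B^(N-i) * F (Suc i))"
      by (simp add: algebra_simps sum.distrib)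
    finally have s1: "(\<Sum>n\<le>Suc N. real (Suc N choose n) * A^n * B^(Suc N-n) * F n)
        = B^(Suc N) * F 0 + (\<Sum>i\<le>N. real (N choose i) * A^Suc i * B^(N-i) * F (Suc i))
                 + (\<Sum>i\<le>N. real (N choose Suc i) * A^Suc i * B^(N-i) * F (Suc i))" .
    have s2: "B^(Suc N) * F 0 + (\<Sum>i\<le>N. real (N choose Suc i) * A^Suc i * B^(N-i) * F (Suc i))
        = (\<Sum>n\<le>Suc N. real (N choose n) * A^n * B^(Suc N-n) * F n)"
      by (subst sum.atMost_Suc_shift) simp
    show ?thesis unfolding e1 e2 s1 s2[symmetric] by simp
  qed
  finally show ?case unfolding A_def B_def .
qed

lemma outputs_facts:
  assumes j: "j < d" and s1: "1 \<le> s"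
  shows "finite (ss_outputs d s)"
    and "card {S\<in>ss_outputs d s. j \<notin> S} = (d-1) choose s"
    and "card {S\<in>ss_outputs d s. j \<in> S} = (d-1) choose (s-1)"
    and "card (ss_outputs d s) = d choose s"
proof -
  have fo: "ss_outputs d s \<subseteq> Pow {..<d}" unfolding ss_outputs_def by auto
  show fin: "finite (ss_outputs d s)" using finite_subset[OF fo] by simp
  have tot: "card (ss_outputs d s) = d choose s"
    unfolding ss_outputs_def using n_subsets[of "{..<d}" s] by simp
  show "card (ss_outputs d s) = d choose s" by (rule tot)
  have "{S\<in>ss_outputs d s. j \<notin> S} = {S. S \<subseteq> {..<d} - {j} \<and> card S = s}"
    unfolding ss_outputs_def by auto
  hence nc: "card {S\<in>ss_outputs d s. j \<notin> S} = (d-1) choose s"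
    using n_subsets[of "{..<d} - {j}" s] j by simp
  show "card {S\<in>ss_outputs d s. j \<notin> S} = (d-1) choose s" by (rule nc)
  have "card (ss_outputs d s) = card {S\<in>ss_outputs d s. j \<in> S} + card {S\<in>ss_outputs d s. j \<notin> S}"
  proof -
    have "ss_outputs d s = {S\<in>ss_outputs d s. j \<in> S} \<union> {S\<in>ss_outputs d s. j \<notin> S}" by auto
    moreover have "{S\<in>ss_outputs d s. j \<in> S} \<inter> {S\<in>ss_outputs d s. j \<notin> S} = {}" by auto
    ultimately show ?thesis using fin by (metis (no_types, lifting) card_Un_disjoint finite_Un)
  qed
  moreover have "d choose s = ((d-1) choose (s-1)) + ((d-1) choose s)"
  proof -
    have "d = Suc (d-1)" "s = Suc (s-1)" using j s1 by auto
    then show ?thesis by (metis binomial_Suc_Suc)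
  qed
  ultimately show "card {S\<in>ss_outputs d s. j \<in> S} = (d-1) choose (s-1)" using tot nc by linarith
qed

lemma est_loss_formula:
  assumes S: "S \<subseteq> {..<d}" "card S = s" and j: "j < d"
  shows "est_loss d m b j S = (real s*(1-b)^2 + (real d - real s)*b^2)/m^2 + 1 + 2*b/m
            - 2*(if j \<in> S then 1 else 0)/m"
proof -
  define u where "u = (\<lambda>i. (if i \<in> S then 1 else 0) - b :: real)"
  define v where "v = (\<lambda>i::nat. if i = j then 1 else 0 :: real)"
  have "est_loss d m b j S = (\<Sum>i<d. (u i)^2/m^2 - 2*(u i * v i)/m + (v i)^2)"
    unfolding est_loss_def u_def v_def by (intro sum.cong) (auto simp: power2_diff power_divide)
  also have "\<dots> = (\<Sum>i<d. (u i)^2)/m^2 - 2*(\<Sum>i<d. u i * v i)/m + (\<Sum>i<d. (v i)^2)"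
    by (simp add: sum.distrib sum_subtractf sum_divide_distrib sum_distrib_left)
  also have "(\<Sum>i<d. (u i)^2) = real s*(1-b)^2 + (real d - real s)*b^2"
  proof -
    have "(\<Sum>i<d. (u i)^2) = (\<Sum>i\<in>{..<d} \<inter> S. (1-b)^2) + (\<Sum>i\<in>{..<d} - S. b^2)"
    proof -
      have "(\<Sum>i<d. (u i)^2) = (\<Sum>i<d. if i \<in> S then (1-b)^2 else b^2)"
        unfolding u_def by (intro sum.cong) auto
      also have "\<dots> = (\<Sum>i\<in>{..<d} \<inter> S. (1-b)^2) + (\<Sum>i\<in>{..<d} - S. b^2)"
        by (subst sum.If_cases) (auto simp: Int_def Diff_eq)
      finally show ?thesis .
    qed
    also have "\<dots> = real s*(1-b)^2 + (real d - real s)*b^2"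
    proof -
      have "{..<d} \<inter> S = S" using S by auto
      moreover have "card ({..<d} - S) = d - s" using S by (simp add: card_Diff_subset finite_subset)
      moreover have "s \<le> d" using S card_mono[of "{..<d}" S] by simp
      ultimately show ?thesis using S by (simp add: of_nat_diff)
    qed
    finally show ?thesis .
  qed
  also have "(\<Sum>i<d. u i * v i) = (if j \<in> S then 1 else 0) - b"
    unfolding u_def v_def using j by (simp add: if_distrib cong: if_cong)
  also have "(\<Sum>i<d. (v i)^2) = 1"
  proof -
    have "(\<Sum>i<d. (v i)^2) = (\<Sum>i<d. if i = j then 1 else 0)" unfolding v_def by (intro sum.cong) auto
    thus ?thesis using j by simp
  qed
  finally show ?thesis by (simp add: diff_divide_distrib algebra_simps)
qed


lemma sum_if_card:
  assumes "finite Os"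
  shows "(\<Sum>S\<in>Os. if P S then a else b) = real (card {S\<in>Os. P S}) * a + real (card {S\<in>Os. \<not> P S}) * (b::real)"
proof -
  have "(\<Sum>S\<in>Os. if P S then a else b) = (\<Sum>S\<in>Os \<inter> {S. P S}. a) + (\<Sum>S\<in>Os \<inter> - {S. P S}. b)"
    using assms by (rule sum.If_cases)
  moreover have "Os \<inter> {S. P S} = {S\<in>Os. P S}" "Os \<inter> - {S. P S} = {S\<in>Os. \<not> P S}" by auto
  ultimately show ?thesis by simp
qed

definition K0 :: "real \<Rightarrow> real \<Rightarrow> real \<Rightarrow> real \<Rightarrow> real" where
  "K0 d s m b = (s*(1-b)^2 + (d-s)*b^2)/m^2 + 1 + 2*b/m"

lemma ss_risk_eq:
  assumes j: "j < d" and s1: "1 \<le> s" and sd: "s \<le> d"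
  shows "ss_risk d s eps j = K0 d s (m_ss d s eps) (b_ss d s eps)
            - 2 * (real ((d-1) choose (s-1)) * ss_c1 d s eps) / m_ss d s eps"
    and "real ((d-1) choose (s-1)) * ss_c1 d s eps + real ((d-1) choose s) * ss_c2 d s eps = 1"
proof -
  define A where "A = real ((d-1) choose (s-1))"
  define B where "B = real ((d-1) choose s)"
  define m where "m = m_ss d s eps"
  define b where "b = b_ss d s eps"
  define c1 where "c1 = ss_c1 d s eps"
  define c2 where "c2 = ss_c2 d s eps"
  define K where "K = K0 d s m b"
  have "0 < (d-1) choose (s-1)" using s1 sd by (simp add: zero_less_binomial_iff)
  hence A1: "A \<ge> 1" unfolding A_def by linarith
  have den: "A * exp eps + B > 0" using A1 unfolding B_def by (smt (verit) exp_gt_zero mult_pos_pos of_nat_0_le_iff)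
  have c12: "A * c1 + B * c2 = 1" unfolding c1_def c2_def ss_c1_def ss_c2_def A_def[symmetric] B_def[symmetric]
  proof -
    have "A * (exp eps / (A * exp eps + B)) + B * (1 / (A * exp eps + B)) = (A*exp eps + B)/(A * exp eps + B)"
      by (simp only: add_divide_distrib times_divide_eq_right mult_1_right)
    also have "\<dots> = 1" using den by simp
    finally show "A * (exp eps / (A * exp eps + B)) + B * (1 / (A * exp eps + B)) = 1" .
  qed
  show "real ((d-1) choose (s-1)) * ss_c1 d s eps + real ((d-1) choose s) * ss_c2 d s eps = 1"
    using c12 unfolding A_def B_def c1_def c2_def .
  note of = outputs_facts[OF j s1]
  have "ss_risk d s eps j = (\<Sum>S\<in>ss_outputs d s. if j \<in> S then c1 * (K - 2/m) else c2 * K)"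
    unfolding ss_risk_def
  proof (intro sum.cong refl)
    fix S assume "S \<in> ss_outputs d s"
    hence S: "S \<subseteq> {..<d}" "card S = s" unfolding ss_outputs_def by auto
    show "q_ss d s eps j S * est_loss d (m_ss d s eps) (b_ss d s eps) j S = (if j \<in> S then c1 * (K - 2/m) else c2 * K)"
      unfolding est_loss_formula[OF S j] q_ss_def K_def K0_def m_def b_def c1_def c2_def
      by (auto simp: diff_divide_distrib)
  qed
  also have "\<dots> = A * (c1 * (K - 2/m)) + B * (c2 * K)"
    unfolding sum_if_card[OF of(1)] of(2) of(3) A_def B_def by simp
  also have "\<dots> = K * (A * c1 + B * c2) - 2 * (A * c1) / m" by (simp add: algebra_simps)
  finally have fin: "ss_risk d s eps j = K * (A * c1 + B * c2) - 2 * (A * c1) / m" .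
  have fin2: "ss_risk d s eps j = K - 2 * (A * c1) / m" using fin c12 by simp
  show "ss_risk d s eps j = K0 d s (m_ss d s eps) (b_ss d s eps)
            - 2 * (real ((d-1) choose (s-1)) * ss_c1 d s eps) / m_ss d s eps"
    using fin2 unfolding K_def m_def b_def A_def c1_def .
qed


lemma pi_sums:
  fixes zs :: "nat \<Rightarrow> nat set" and j :: nat
  assumes N0: "N > 0" and c2: "ss_c2 d s eps > 0" and c1: "ss_c1 d s eps = exp eps * ss_c2 d s eps"
    and p0: "0 < real s / real d" and p1: "real s / real d < 1"
  defines "n \<equiv> card {l\<in>{..<N}. j \<in> zs l}"
  defines "\<theta> \<equiv> real n / real N"
  defines "p \<equiv> real s / real d"
  shows "(\<Sum>k<N. mmrc_pi d s eps N j zs k * (if j \<in> zs k then 1 else 0))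
          = (if \<theta> \<le> p then exp eps * \<theta> / (exp eps * p + 1 - p)
             else (exp eps * p + \<theta> - p) / (exp eps * p + 1 - p))"
    and "(\<Sum>k<N. mmrc_pi d s eps N j zs k) = 1"
proof -
  define e where "e = exp eps"
  define C1 where "C1 = ss_c1 d s eps"
  define C2 where "C2 = ss_c2 d s eps"
  define D where "D = e*p+1-p"
  have e1: "e > 0" unfolding e_def by simp
  have ep0: "e*p > 0" using p0 e1 unfolding p_def by (intro mult_pos_pos)
  have D0: "D > 0" unfolding D_def using ep0 p1 unfolding p_def by linarith
  have Z: "p * C1 + (1 - p) * C2 = C2 * D" unfolding C1_def C2_def c1 D_def e_def by (simp add: algebra_simps)
  have C20: "C2 > 0" using c2 C2_def by simp
  have C1e: "C1 = e*C2" unfolding C1_def c1 e_def C2_def ..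
  have nN: "n \<le> N" unfolding n_def using card_mono[of "{..<N}" "{l\<in>{..<N}. j \<in> zs l}"] by auto
  have cardn: "card {k\<in>{..<N}. \<not> j \<in> zs k} = N - n"
  proof -
    have "{k\<in>{..<N}. \<not> j \<in> zs k} = {..<N} - {l\<in>{..<N}. j \<in> zs l}" by auto
    moreover have "card ({..<N} - {l\<in>{..<N}. j \<in> zs l}) = N - card {l\<in>{..<N}. j \<in> zs l}"
      by (subst card_Diff_subset) auto
    ultimately show ?thesis unfolding n_def by simp
  qed
  define tu where "tu = C1 / (real N * (p * C1 + (1 - p) * C2))"
  define tl where "tl = C2 / (real N * (p * C1 + (1 - p) * C2))"
  define \<alpha> where "\<alpha> = (if \<theta> = p then C1 / (real N * (\<theta> * C1 + (1 - \<theta>) * C2))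
                     else if \<theta> < p then tu else (1 - real N * (1 - \<theta>) * tl) / (real N * \<theta>))"
  define \<beta> where "\<beta> = (if \<theta> = p then C2 / (real N * (\<theta> * C1 + (1 - \<theta>) * C2))
                     else if \<theta> < p then (1 - real N * \<theta> * tu) / (real N * (1 - \<theta>)) else tl)"
  have pik: "mmrc_pi d s eps N j zs k = (if j \<in> zs k then \<alpha> else \<beta>)" for k
    unfolding mmrc_pi_def Let_def \<alpha>_def \<beta>_def tu_def tl_def C1_def C2_def
      \<theta>_def[symmetric] n_def[symmetric] p_def[symmetric]
    by auto
  have S1: "(\<Sum>k<N. mmrc_pi d s eps N j zs k * (if j \<in> zs k then 1 else 0)) = real n * \<alpha>"
  proof -
    have "(\<Sum>k<N. mmrc_pi d s eps N j zs k * (if j \<in> zs k then 1 else 0)) = (\<Sum>k<N. if j \<in> zs k then \<alpha> else 0)"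
      unfolding pik by (intro sum.cong) auto
    also have "\<dots> = real n * \<alpha>" unfolding sum_if_card[OF finite_lessThan] n_def by simp
    finally show ?thesis .
  qed
  have S2: "(\<Sum>k<N. mmrc_pi d s eps N j zs k) = real n * \<alpha> + real (N - n) * \<beta>"
    unfolding pik sum_if_card[OF finite_lessThan] cardn n_def by simp
  have Nth: "real n = real N * \<theta>" unfolding \<theta>_def using N0 by simp
  have Nth1: "real (N - n) = real N * (1 - \<theta>)" using nN N0 unfolding \<theta>_def by (simp add: of_nat_diff field_simps)
  have NZ: "real N * (p * C1 + (1 - p) * C2) = real N * C2 * D" unfolding Z by simp
  have NZ0: "real N * C2 * D > 0" using N0 C20 D0 by simp
  have main: "real n * \<alpha> = (if \<theta> \<le> p then e * \<theta> / D else (e * p + \<theta> - p) / D)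
     \<and> real n * \<alpha> + real (N - n) * \<beta> = 1"
  proof (cases "\<theta> = p")
    case True
    have a: "\<alpha> = e / (real N * D)" "\<beta> = 1 / (real N * D)"
      unfolding \<alpha>_def \<beta>_def using True NZ NZ0 C20 unfolding C1_def c1 e_def[symmetric] C2_def[symmetric]
      by (simp_all add: field_simps)
    have x1: "real N * \<theta> * (e / (real N * D)) = e*\<theta>/D" using N0 D0 by simp
    have x2: "real N * (1-\<theta>) * (1 / (real N * D)) = (1-\<theta>)/D" using N0 D0 by simp
    have x3: "e*\<theta> + (1-\<theta>) = D" unfolding D_def True by simp
    have x4: "e*\<theta>/D + (1-\<theta>)/D = 1" unfolding add_divide_distrib[symmetric] x3 using D0 by simp
    show ?thesis unfolding a Nth Nth1 x1 x2 x4 using True by simp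
  next
    case False
    show ?thesis
    proof (cases "\<theta> < p")
      case True
      have th1: "1 - \<theta> > 0" using True p1 unfolding p_def by linarith
      have tu: "tu = e / (real N * D)"
        unfolding tu_def unfolding NZ unfolding C1e using C20 by simp
      have a: "\<alpha> = e / (real N * D)" unfolding \<alpha>_def using True False tu by simp
      have bb: "\<beta> = (1 - real N * \<theta> * tu) / (real N * (1 - \<theta>))" unfolding \<beta>_def using True False by simp
      have b: "real N * (1-\<theta>) * \<beta> = 1 - real N * \<theta> * (e / (real N * D))"
        unfolding bb tu[symmetric] using th1 N0 by simp
      have x1: "real N * \<theta> * (e / (real N * D)) = e*\<theta>/D" using N0 D0 by simp
      have "real N * \<theta> * \<alpha> = e*\<theta>/D" unfolding a x1 ..
      moreover have "real N * (1-\<theta>) * \<beta> = 1 - e*\<theta>/D" unfolding b x1 ..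
      ultimately show ?thesis unfolding Nth Nth1 using True by simp
    next
      case F2: False
      have th0: "\<theta> > 0" using F2 False p0 unfolding p_def by linarith
      have b: "\<beta> = 1 / (real N * D)"
        unfolding \<beta>_def using F2 False NZ NZ0 C20 unfolding tl_def C2_def[symmetric]
        by (simp add: field_simps)
      have a: "real N * \<theta> * \<alpha> = 1 - real N * (1 - \<theta>) * (1 / (real N * D))"
        unfolding \<alpha>_def using F2 False NZ NZ0 C20 th0 N0 unfolding tl_def C2_def[symmetric]
        by (simp add: field_simps)
      have "\<not> \<theta> \<le> p" using F2 False by simp
      have x2: "real N * (1-\<theta>) * (1 / (real N * D)) = (1-\<theta>)/D" using N0 D0 by simp
      have x3: "1 - (1-\<theta>)/D = (e * p + \<theta> - p) / D"
      proof -
        have "1 - (1-\<theta>)/D = (D - (1-\<theta>))/D" using D0 by (simp add: diff_divide_distrib)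
        also have "D - (1-\<theta>) = e * p + \<theta> - p" unfolding D_def by simp
        finally show ?thesis .
      qed
      have "real N * \<theta> * \<alpha> = (e * p + \<theta> - p) / D" unfolding a x2 x3 ..
      moreover have "real N * (1-\<theta>) * \<beta> = (1-\<theta>)/D" unfolding b x2 ..
      ultimately show ?thesis unfolding Nth Nth1 using \<open>\<not> \<theta> \<le> p\<close> x3 by simp
    qed
  qed
  show "(\<Sum>k<N. mmrc_pi d s eps N j zs k * (if j \<in> zs k then 1 else 0))
          = (if \<theta> \<le> p then exp eps * \<theta> / (exp eps * p + 1 - p)
             else (exp eps * p + \<theta> - p) / (exp eps * p + 1 - p))"
    unfolding S1 using main unfolding D_def e_def by simp
  show "(\<Sum>k<N. mmrc_pi d s eps N j zs k) = 1" unfolding S2 using main by simp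
qed


lemma mmrc_risk_eq:
  assumes j: "j < d" and s1: "1 \<le> s" and sd: "s < d" and N0: "N > 0"
  shows "mmrc_risk d s eps N j = K0 d s (m_mmrc d s eps N) (b_mmrc d s eps N)
            - 2 * mmrc_G d s eps N / m_mmrc d s eps N"
proof -
  define m where "m = m_mmrc d s eps N"
  define b where "b = b_mmrc d s eps N"
  define K where "K = K0 d s m b"
  define p where "p = real s / real d"
  define f where "f = (\<lambda>\<theta>::real. if \<theta> \<le> p then exp eps * \<theta> / (exp eps * p + 1 - p)
                        else (exp eps * p + \<theta> - p) / (exp eps * p + 1 - p))"
  define A where "A = real ((d-1) choose (s-1))"
  define B where "B = real ((d-1) choose s)"
  define T where "T = real (card (ss_outputs d s))"
  note of = outputs_facts[OF j s1]
  have sdle: "s \<le> d" using sd by simp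
  note ssr = ss_risk_eq[OF j s1 sdle, of eps]
  have d0: "real d > 0" using sd by simp
  have p0: "0 < p" unfolding p_def using s1 d0 by simp
  have p1: "p < 1" unfolding p_def using sd d0 by simp
  have A1: "A \<ge> 1"
  proof -
    have "0 < (d-1) choose (s-1)" using s1 sd by (simp add: zero_less_binomial_iff)
    thus ?thesis unfolding A_def by linarith
  qed
  have den: "A * exp eps + B > 0" using A1 unfolding B_def by (smt (verit) exp_gt_zero mult_pos_pos of_nat_0_le_iff)
  have c2: "ss_c2 d s eps > 0" unfolding ss_c2_def A_def[symmetric] B_def[symmetric] using den by simp
  have c1: "ss_c1 d s eps = exp eps * ss_c2 d s eps" unfolding ss_c1_def ss_c2_def by simp
  have TAB: "T = A + B"
  proof -
    have "d choose s = ((d-1) choose (s-1)) + ((d-1) choose s)"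
    proof -
      have "d = Suc (d-1)" "s = Suc (s-1)" using j s1 by auto
      then show ?thesis by (metis binomial_Suc_Suc)
    qed
    thus ?thesis unfolding T_def A_def B_def of(4) by simp
  qed
  have AT: "A / T = p"
  proof -
    have "s * (d choose s) = d * ((d - 1) choose (s - 1))" using s1 by (simp add: times_binomial_minus1_eq)
    hence "real s * T = real d * A" unfolding T_def of(4) A_def by (metis of_nat_mult)
    moreover have "T > 0" using TAB A1 unfolding B_def by simp
    ultimately show ?thesis unfolding p_def using d0 by (simp add: field_simps)
  qed
  have T0: "T > 0" using TAB A1 unfolding B_def by simp
  have BT: "B / T = 1 - p" using AT TAB T0 by (simp add: field_simps)
  define F where "F = (\<lambda>n::nat. K - 2 * f (real n / real N) / m)"
  have inner: "(\<Sum>k<N. mmrc_pi d s eps N j zs k * est_loss d m b j (zs k)) = F (card {l\<in>{..<N}. j \<in> zs l})"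
    if zs: "zs \<in> PiE {..<N} (\<lambda>_. ss_outputs d s)" for zs
  proof -
    have "(\<Sum>k<N. mmrc_pi d s eps N j zs k * est_loss d m b j (zs k))
        = (\<Sum>k<N. K * mmrc_pi d s eps N j zs k - (2/m) * (mmrc_pi d s eps N j zs k * (if j \<in> zs k then 1 else 0)))"
    proof (intro sum.cong refl)
      fix k assume "k \<in> {..<N}"
      hence "zs k \<in> ss_outputs d s" using zs by auto
      hence S: "zs k \<subseteq> {..<d}" "card (zs k) = s" unfolding ss_outputs_def by auto
      show "mmrc_pi d s eps N j zs k * est_loss d m b j (zs k)
          = K * mmrc_pi d s eps N j zs k - (2/m) * (mmrc_pi d s eps N j zs k * (if j \<in> zs k then 1 else 0))"
        unfolding est_loss_formula[OF S j] K_def K0_def by (simp add: algebra_simps)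
    qed
    also have "\<dots> = K * (\<Sum>k<N. mmrc_pi d s eps N j zs k)
        - (2/m) * (\<Sum>k<N. mmrc_pi d s eps N j zs k * (if j \<in> zs k then 1 else 0))"
      by (simp add: sum_subtractf sum_distrib_left)
    also have "\<dots> = F (card {l\<in>{..<N}. j \<in> zs l})"
      unfolding pi_sums[OF N0 c2 c1 p0[unfolded p_def] p1[unfolded p_def]] F_def f_def p_def by simp
    finally show ?thesis .
  qed
  have "mmrc_risk d s eps N j = (\<Sum>zs\<in>PiE {..<N} (\<lambda>_. ss_outputs d s). F (card {l\<in>{..<N}. j \<in> zs l})) / T^N"
    unfolding mmrc_risk_def T_def m_def[symmetric] b_def[symmetric] by (simp add: inner)
  also have "\<dots> = (\<Sum>n\<le>N. real (N choose n) * A^n * B^(N-n) * F n) / T^N"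
    unfolding count_PiE[OF of(1)] of(2) of(3) A_def B_def by simp
  also have "\<dots> = (\<Sum>n\<le>N. real (N choose n) * p^n * (1-p)^(N-n) * F n)"
  proof -
    have "(\<Sum>n\<le>N. real (N choose n) * A^n * B^(N-n) * F n) / T^N
        = (\<Sum>n\<le>N. real (N choose n) * A^n * B^(N-n) * F n / T^N)" by (simp add: sum_divide_distrib)
    also have "\<dots> = (\<Sum>n\<le>N. real (N choose n) * p^n * (1-p)^(N-n) * F n)"
    proof (intro sum.cong refl)
      fix n assume "n \<in> {..N}"
      hence "T^N = T^n * T^(N-n)" by (simp add: power_add[symmetric])
      thus "real (N choose n) * A^n * B^(N-n) * F n / T^N = real (N choose n) * p^n * (1-p)^(N-n) * F n"
        unfolding BT[symmetric] unfolding AT[symmetric] using T0 by (simp add: power_divide)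
    qed
    finally show ?thesis .
  qed
  also have "\<dots> = K * (\<Sum>n\<le>N. real (N choose n) * p^n * (1-p)^(N-n))
       - 2 / m * (\<Sum>n\<le>N. real (N choose n) * p^n * (1-p)^(N-n) * f (real n / real N))"
    unfolding F_def by (simp add: algebra_simps sum_subtractf sum_distrib_left sum_divide_distrib)
  also have "(\<Sum>n\<le>N. real (N choose n) * p^n * (1-p)^(N-n)) = 1" using mom0[of p "1-p" N] by simp
  also have "(\<Sum>n\<le>N. real (N choose n) * p^n * (1-p)^(N-n) * f (real n / real N)) = mmrc_G d s eps N"
    unfolding mmrc_G_def Let_def f_def p_def by simp
  finally show ?thesis unfolding K_def m_def b_def by simp
qed

lemma s_facts:
  fixes d :: nat and e :: real
  assumes d2: "d \<ge> 2" and e2: "e \<ge> 2"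
  defines "s \<equiv> nat \<lceil>real d / (1 + e)\<rceil>"
  shows "1 \<le> s" "real d / (1 + e) \<le> real s" "2 * s \<le> d"
proof -
  have x0: "real d / (1 + e) > 0" using d2 e2 by simp
  have cs: "real_of_int \<lceil>real d / (1 + e)\<rceil> \<ge> real d / (1 + e)" by (rule le_of_int_ceiling)
  have cpos: "\<lceil>real d / (1 + e)\<rceil> \<ge> 1" using x0 by (simp add: one_le_ceiling zero_less_ceiling) 
  show "1 \<le> s" unfolding s_def using cpos by linarith
  have rs: "real s = real_of_int \<lceil>real d / (1 + e)\<rceil>" unfolding s_def using cpos by simp
  show "real d / (1 + e) \<le> real s" using cs rs by simp
  have lt: "real s < real d / (1 + e) + 1" unfolding rs using ceiling_correct[of "real d / (1 + e)"] by linarith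
  have "real d / (1 + e) \<le> real d / 3" using e2 by (intro divide_left_mono) auto
  hence "2 * real s < 2 * real d / 3 + 2" using lt by linarith
  hence "real (2*s) < 2 * real d / 3 + 2" by simp
  moreover have "d \<ge> 3 \<or> d = 2" using d2 by linarith
  ultimately show "2 * s \<le> d"
  proof (elim disjE)
    assume "real (2*s) < 2 * real d / 3 + 2" "d \<ge> 3"
    hence "real (2*s) < real d + 1" by linarith
    thus ?thesis by linarith
  next
    assume "real (2*s) < 2 * real d / 3 + 2" "d = 2"
    hence "real (2*s) < 4" by simp
    hence "2*s < 4" by linarith
    thus ?thesis using \<open>d = 2\<close> by simp
  qed
qed


theorem theorem7:
  fixes d N j :: nat and eps lam :: real
  assumes "d \<ge> 2" and "eps \<ge> 1" and "lam > 0" and "j < d"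
    and "real N \<ge> 2 * (exp eps + 1)\<^sup>2 * (1 + lam)\<^sup>2 / (0.24\<^sup>2 * lam\<^sup>2)
                   * ln (8 * (1 + lam) / (0.24 * lam))"
  shows "mmrc_risk d (nat \<lceil>real d / (1 + exp eps)\<rceil>) eps N j
         \<le> (1 + 4 * lam + 5 * lam\<^sup>2 + 2 * lam ^ 3)
            * ss_risk d (nat \<lceil>real d / (1 + exp eps)\<rceil>) eps j"
proof -
  note d2 = assms(1) and eps1 = assms(2) and lam = assms(3) and j = assms(4) and Nb = assms(5)
  define e where "e = exp eps"
  define s where "s = nat \<lceil>real d / (1 + e)\<rceil>"
  have e2: "e \<ge> 2"
  proof -
    have "exp 1 \<le> exp eps" using eps1 by simp
    moreover have "1 + 1 \<le> exp (1::real)" by (rule exp_ge_add_one_self)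
    ultimately show ?thesis unfolding e_def by linarith
  qed
  have e1: "e > 1" using e2 by simp
  note sf = s_facts[OF d2 e2, folded s_def]
  have s1: "1 \<le> s" and sl: "real d / (1 + e) \<le> real s" and s2: "2 * s \<le> d" using sf by auto
  have sd: "s < d" using s1 s2 by simp
  have d0: "real d > 0" using d2 by simp
  define p where "p = real s / real d"
  have pd: "p * real d = real s" unfolding p_def using d0 by simp
  have pl: "1/(1+e) \<le> p" unfolding p_def using sl d0 e1 by (simp add: field_simps)
  have pu: "p \<le> 1/2" unfolding p_def using s2 d0 by (simp add: field_simps)
  have p0: "0 < p" unfolding p_def using s1 d0 by simp
  have p1: "p < 1" using pu by simp
  define L where "L = ln (8 * (1 + lam) / (0.24 * lam))"
  have L1: "L \<ge> 1"
  proof -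
    have hx: "8 * (1 + lam) / (0.24 * lam) \<ge> 3"
    proof -
      have "3 * (0.24 * lam) \<le> 8 * (1 + lam)" using lam by simp
      thus ?thesis using lam by (simp add: field_simps)
    qed
    hence h1: "exp 1 \<le> 8 * (1 + lam) / (0.24 * lam)" using exp_le by linarith
    have h2: "8 * (1 + lam) / (0.24 * lam) > 0" using hx by linarith
    have "ln (exp 1) \<le> L" unfolding L_def using h1 h2 by (subst ln_le_cancel_iff) auto
    thus ?thesis by simp
  qed
  have NL: "real N * lam^2 \<ge> (e+1)^2 * (1+lam)^2"
  proof -
    have "2 * (e + 1)\<^sup>2 * (1 + lam)\<^sup>2 / (0.24\<^sup>2 * lam\<^sup>2) * L \<le> real N" using Nb unfolding e_def L_def .
    moreover have "(e + 1)\<^sup>2 * (1 + lam)\<^sup>2 / lam\<^sup>2 \<le> 2 * (e + 1)\<^sup>2 * (1 + lam)\<^sup>2 / (0.24\<^sup>2 * lam\<^sup>2) * L"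
    proof -
      have "(e + 1)\<^sup>2 * (1 + lam)\<^sup>2 / lam\<^sup>2 \<le> (e + 1)\<^sup>2 * (1 + lam)\<^sup>2 / lam\<^sup>2 * (2 / 0.24\<^sup>2 * L)"
      proof -
        have "2 / 0.24\<^sup>2 * L \<ge> 2 / 0.24\<^sup>2 * 1" using L1 by (intro mult_left_mono) auto
        moreover have "(2::real) / 0.24\<^sup>2 \<ge> 1" by (simp add: power2_eq_square)
        ultimately have c1: "1 \<le> 2 / 0.24\<^sup>2 * L" by linarith
        have x0: "(e + 1)\<^sup>2 * (1 + lam)\<^sup>2 / lam\<^sup>2 \<ge> 0" by simp
        show ?thesis using mult_left_mono[OF c1 x0] by simp
      qed
      also have "\<dots> = 2 * (e + 1)\<^sup>2 * (1 + lam)\<^sup>2 / (0.24\<^sup>2 * lam\<^sup>2) * L" by (simp add: field_simps)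
      finally show ?thesis .
    qed
    ultimately have "(e + 1)\<^sup>2 * (1 + lam)\<^sup>2 / lam\<^sup>2 \<le> real N" by linarith
    thus ?thesis using lam by (simp add: field_simps)
  qed
  have N1: "e^2 \<le> 4 * real N * lam^2"
  proof -
    have "e^2 \<le> (e+1)^2" using e1 by (intro power_mono) auto
    also have "\<dots> \<le> (e+1)^2 * (1+lam)^2"
    proof -
      have "1 \<le> (1+lam)^2" using lam by (intro one_le_power) simp
      from mult_left_mono[OF this, of "(e+1)^2"] show ?thesis by simp
    qed
    finally have "e^2 \<le> (e+1)^2 * (1+lam)^2" .
    moreover have "real N * lam^2 \<ge> 0" by simp
    moreover have "4 * real N * lam^2 = 4 * (real N * lam^2)" by simp
    ultimately show ?thesis using NL by linarith
  qed
  have N2: "(1+e)*(1+lam)^2 \<le> 2 * real N * lam^2"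
  proof -
    have "(e+1) * 1 \<le> (e+1) * (e+1)" using e1 by (intro mult_left_mono) auto
    hence "(1+e) \<le> (e+1)^2" by (simp add: power2_eq_square add.commute)
    hence "(1+e)*(1+lam)^2 \<le> (e+1)^2*(1+lam)^2" by (intro mult_right_mono) auto
    moreover have "real N * lam^2 \<ge> 0" by simp
    moreover have "2 * real N * lam^2 = 2 * (real N * lam^2)" by simp
    ultimately show ?thesis using NL by linarith
  qed
  have N0: "N > 0"
  proof -
    have "(e+1)^2 * (1+lam)^2 > 0" using e1 lam by simp
    hence "real N * lam^2 > 0" using NL by linarith
    thus ?thesis by (simp add: zero_less_mult_iff)
  qed
  define w where "w = (\<lambda>n. real (N choose n) * p^n * (1-p)^(N-n))"
  define \<delta> where "\<delta> = (\<Sum>n\<le>N. w n * max 0 (p - real n / real N))"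
  note GD = G_decomp[OF N0 p0 p1 e1, folded w_def, folded \<delta>_def]
  define g where "g = e*p/(e*p+1-p)"
  define r where "r = \<delta> / (p*(1-p))"
  have pq0: "p*(1-p) > 0" using p0 p1 by simp
  have Gval: "mmrc_G d s eps N = g - (e-1)*(p*(1-p))*r/(e*p+1-p)"
  proof -
    have "mmrc_G d s eps N = e*p/(e*p+1-p) - (e-1)/(e*p+1-p) * \<delta>"
      using GD(1) unfolding mmrc_G_def Let_def p_def[symmetric] e_def[symmetric] \<delta>_def w_def by simp
    moreover have "(e-1)*(p*(1-p))*r = (e-1) * \<delta>" unfolding r_def using pq0 p0 p1 by simp
    ultimately show ?thesis unfolding g_def by (metis times_divide_eq_left mult.commute)
  qed
  have GD2: "\<delta> \<ge> 0" using GD(2) unfolding \<delta>_def w_def by simp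
  have GD3: "4 * real N * \<delta>^2 \<le> p*(1-p)" using GD(3) unfolding \<delta>_def w_def by simp
  have r0: "r \<ge> 0" unfolding r_def using GD2 pq0 by simp
  have rN: "4 * real N * (p*(1-p)) * r^2 \<le> 1"
  proof -
    have "4 * real N * (p*(1-p)) * r^2 = 4 * real N * \<delta>^2 / (p*(1-p))"
    proof -
      have gen: "\<And>q::real. q > 0 \<Longrightarrow> 4*real N*q*(\<delta>/q)^2 = 4*real N*\<delta>^2/q"
        by (simp add: power2_eq_square field_simps)
      show ?thesis unfolding r_def using gen[OF pq0] .
    qed
    also have "\<dots> \<le> 1" using GD3 pq0 by simp
    finally show ?thesis .
  qed
  note KI = key_ineq[OF _ e1 pl pu _ r0 rN lam N1 N2 g_def Gval, of "real d", unfolded pd]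
  have KI1: "mf (real d) (real s) g > 0" using KI d2 s1 by simp
  have KI2: "mf (real d) (real s) (mmrc_G d s eps N) > 0" using KI d2 s1 by simp
  have KI3: "Vf (real d) (real s) (mmrc_G d s eps N) / (mf (real d) (real s) (mmrc_G d s eps N))^2
      \<le> (1 + 4*lam + 5*lam^2 + 2*lam^3) * (Vf (real d) (real s) g / (mf (real d) (real s) g)^2)"
    using KI d2 s1 by simp
  have d1: "real d > 1" using d2 by simp
  have mm: "m_mmrc d s eps N = mf (real d) (real s) (mmrc_G d s eps N)"
    unfolding m_mmrc_def mf_def by (simp add: diff_divide_distrib)
  have bm: "b_mmrc d s eps N = (real s - mmrc_G d s eps N)/(real d - 1)" unfolding b_mmrc_def ..
  have risk_m: "mmrc_risk d s eps N j = Vf (real d) (real s) (mmrc_G d s eps N) / (mf (real d) (real s) (mmrc_G d s eps N))^2"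
    unfolding mmrc_risk_eq[OF j s1 sd N0] K0_def mm bm using risk_form[OF d1 KI2[THEN less_imp_neq, symmetric]]
    by simp
  define A where "A = real ((d-1) choose (s-1))"
  define B where "B = real ((d-1) choose s)"
  have A0: "A > 0"
  proof -
    have "0 < (d-1) choose (s-1)" using s1 sd by (simp add: zero_less_binomial_iff)
    thus ?thesis unfolding A_def by simp
  qed
  have BA: "B * real s = A * (real d - real s)"
  proof -
    have "Suc (s-1) * ((d-1) choose Suc (s-1)) = (d-1) * ((d-1-1) choose (s-1))" by (rule binomial_absorption)
    moreover have "((d-1) - (s-1)) * ((d-1) choose (s-1)) = (d-1) * ((d-1-1) choose (s-1))" by (rule binomial_absorb_comp)
    ultimately have "s * ((d-1) choose s) = (d - s) * ((d-1) choose (s-1))" using s1 sd by simp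
    hence "real s * B = real (d - s) * A" unfolding A_def B_def by (metis of_nat_mult)
    thus ?thesis using sd by (simp add: of_nat_diff mult.commute)
  qed
  have "real s \<le> e * real s" using e1 mult_right_mono[of 1 e "real s"] by simp
  hence den0: "e * real s + real d - real s > 0" using d0 by linarith
  have gs: "g = e * real s / (e * real s + real d - real s)"
  proof -
    have a1: "e*p + 1 - p = (e * real s + real d - real s)/real d" unfolding p_def using d0 by (simp add: field_simps)
    have a2: "e*p = (e*real s)/real d" unfolding p_def by simp
    show ?thesis unfolding g_def a1 a2 using d0 den0 pd by (simp add: field_simps)
  qed
  have gval: "A * ss_c1 d s eps = g"
  proof -
    have s0: "real s > 0" using s1 by simp
    have B': "B = A * (real d - real s) / real s" using BA s0 by (simp add: field_simps)
    have "A * ss_c1 d s eps = A * e / (A * e + B)" unfolding ss_c1_def A_def B_def e_def by simp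
    also have "\<dots> = e * real s / (e * real s + real d - real s)"
    proof -
      have "real s \<le> e * real s" using e1 mult_right_mono[of 1 e "real s"] by simp
      hence dn: "e * real s + real d - real s > 0" using d0 by linarith
      have "A * e + B = A * (e * real s + real d - real s) / real s" unfolding B' using s0 by (simp add: field_simps)
      hence "A * e / (A * e + B) = (A * e * real s) / (A * (e * real s + real d - real s))"
        by (simp only: divide_divide_eq_right)
      also have "\<dots> = (A * (e * real s)) / (A * (e * real s + real d - real s))" by (simp add: mult_ac)
      also have "\<dots> = e * real s / (e * real s + real d - real s)" using A0 by (rule mult_divide_mult_cancel_left[OF less_imp_neq[symmetric]])
      finally show ?thesis .
    qed
    also have "\<dots> = g" using gs ..
    finally show ?thesis .
  qed
  have "real s \<le> e * real s" using e1 mult_right_mono[of 1 e "real s"] by simp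
  hence den: "e * real s + real d - real s > 0" using d0 by linarith
  have den2: "real s * (e - 1) + real d > 0" using den by (simp add: algebra_simps)
  have mss: "m_ss d s eps = mf (real d) (real s) g"
    unfolding m_ss_def mf_def gs e_def[symmetric] using den den2 d1
    by (simp add: field_simps)
  have bss: "b_ss d s eps = (real s - g)/(real d - 1)"
    unfolding b_ss_def gs e_def[symmetric] using den den2 d1
    by (simp add: field_simps)
  have risk_s: "ss_risk d s eps j = Vf (real d) (real s) g / (mf (real d) (real s) g)^2"
    unfolding ss_risk_eq(1)[OF j s1 sd[THEN less_imp_le], of eps] K0_def mss bss A_def[symmetric] gval
    using risk_form[OF d1 KI1[THEN less_imp_neq, symmetric]] by simp
  show ?thesis using KI3 unfolding s_def[symmetric] e_def[symmetric] risk_m risk_s .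
qed

end
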